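(* Let $G=(V,E)$ be a graph on $n$ vertices such that $\deg(u)+\deg(v)\geq n+d-2$ for all pairs of distinct non-adjacent vertices $u,v$. If there is a vertex $w\in V$ such that every pair of non-adjacent vertices $u,v\in N_G(w)$ is $\mathcal{R}_d$-linked in $G$, then $G$ is rigid in $\mathbb{R}^d$.
   Context: A graph is rigid in $\mathbb{R}^d$ if some (equivalently every) generic $d$-dimensional bar-and-joint framework of it (coordinates algebraically independent over $\mathbb{Q}$) admits no continuous edge-length-preserving motion changing some pairwise distance. $r_d$ is the rank function of the $d$-dimensional generic rigidity matroid on edge sets (linear independence of rows of the rigidity matrix of a generic framework); a non-adjacent pair $\{u,v\}$ is $\mathcal{R}_d$-linked in $G$ if $r_d(G+uv)=r_d(G)$. *)

theory Defs
  imports "HOL-Analysis.Analysis"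
begin

definition simple_graph :: "'a set \<Rightarrow> 'a set set \<Rightarrow> bool" where
  "simple_graph V E \<longleftrightarrow> finite V \<and> (\<forall>e\<in>E. \<exists>u v. e = {u, v} \<and> u \<in> V \<and> v \<in> V \<and> u \<noteq> v)"

definition degree :: "'a set \<Rightarrow> 'a set set \<Rightarrow> 'a \<Rightarrow> nat" where
  "degree V E v = card {u \<in> V. {u, v} \<in> E}"

definition neighbourhood :: "'a set \<Rightarrow> 'a set set \<Rightarrow> 'a \<Rightarrow> 'a set" where
  "neighbourhood V E w = {u \<in> V. {u, w} \<in> E}"

text \<open>A polynomial with rational coefficients is a finitely supported coefficient function on
  monomials; a monomial is an exponent function m with support in X.\<close>
definition alg_indep_rat :: "'b set \<Rightarrow> ('b \<Rightarrow> real) \<Rightarrow> bool" where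
  "alg_indep_rat X f \<longleftrightarrow>
     (\<forall>c :: ('b \<Rightarrow> nat) \<Rightarrow> rat.
        finite {m. c m \<noteq> 0} \<and> (\<forall>m. c m \<noteq> 0 \<longrightarrow> (\<forall>x. m x \<noteq> 0 \<longrightarrow> x \<in> X)) \<and>
        (\<Sum>m\<in>{m. c m \<noteq> 0}. of_rat (c m) * (\<Prod>x\<in>X. f x ^ m x)) = 0
        \<longrightarrow> (\<forall>m. c m = 0))"

text \<open>A d-dimensional framework assigns to each vertex v the point p v, with coordinates
  p v i for i < d. It is generic if its coordinates are algebraically independent over Q.\<close>
definition generic :: "nat \<Rightarrow> 'a set \<Rightarrow> ('a \<Rightarrow> nat \<Rightarrow> real) \<Rightarrow> bool" where
  "generic d V p \<longleftrightarrow> alg_indep_rat (V \<times> {..<d}) (\<lambda>(v, i). p v i)"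

definition sqdist :: "nat \<Rightarrow> (nat \<Rightarrow> real) \<Rightarrow> (nat \<Rightarrow> real) \<Rightarrow> real" where
  "sqdist d x y = (\<Sum>i<d. (x i - y i)^2)"

definition flexible_framework :: "nat \<Rightarrow> 'a set \<Rightarrow> 'a set set \<Rightarrow> ('a \<Rightarrow> nat \<Rightarrow> real) \<Rightarrow> bool" where
  "flexible_framework d V E p \<longleftrightarrow>
     (\<exists>q :: real \<Rightarrow> 'a \<Rightarrow> nat \<Rightarrow> real.
        (\<forall>v\<in>V. \<forall>i<d. continuous_on {0..1} (\<lambda>t. q t v i)) \<and>
        (\<forall>v\<in>V. \<forall>i<d. q 0 v i = p v i) \<and>
        (\<forall>t\<in>{0..1}. \<forall>u\<in>V. \<forall>v\<in>V. {u, v} \<in> E \<longrightarrow> sqdist d (q t u) (q t v) = sqdist d (p u) (p v)) \<and>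
        (\<exists>t\<in>{0..1}. \<exists>u\<in>V. \<exists>v\<in>V. sqdist d (q t u) (q t v) \<noteq> sqdist d (p u) (p v)))"

definition rigid :: "nat \<Rightarrow> 'a set \<Rightarrow> 'a set set \<Rightarrow> bool" where
  "rigid d V E \<longleftrightarrow> (\<forall>p. generic d V p \<longrightarrow> \<not> flexible_framework d V E p)"

text \<open>Row of the rigidity matrix for the edge {u,v}; columns indexed by (vertex x, coordinate j).\<close>
definition rig_row :: "nat \<Rightarrow> ('a \<Rightarrow> nat \<Rightarrow> real) \<Rightarrow> 'a set \<Rightarrow> 'a \<Rightarrow> nat \<Rightarrow> real" where
  "rig_row d p e x j =
     (if x \<in> e \<and> j < d then p x j - p (THE y. e = {x, y}) j else 0)"

definition rows_indep :: "nat \<Rightarrow> ('a \<Rightarrow> nat \<Rightarrow> real) \<Rightarrow> 'a set set \<Rightarrow> bool" where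
  "rows_indep d p F \<longleftrightarrow> finite F \<and>
     (\<forall>c :: 'a set \<Rightarrow> real. (\<forall>x j. (\<Sum>e\<in>F. c e * rig_row d p e x j) = 0) \<longrightarrow> (\<forall>e\<in>F. c e = 0))"

definition rig_rank :: "nat \<Rightarrow> ('a \<Rightarrow> nat \<Rightarrow> real) \<Rightarrow> 'a set set \<Rightarrow> nat" where
  "rig_rank d p F = Max (card ` {F'. F' \<subseteq> F \<and> rows_indep d p F'})"

definition rank_d :: "nat \<Rightarrow> 'a set \<Rightarrow> 'a set set \<Rightarrow> nat" where
  "rank_d d V F = rig_rank d (SOME p. generic d V p) F"

definition R_linked :: "nat \<Rightarrow> 'a set \<Rightarrow> 'a set set \<Rightarrow> 'a \<Rightarrow> 'a \<Rightarrow> bool" where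
  "R_linked d V E u v \<longleftrightarrow> rank_d d V (insert {u, v} E) = rank_d d V E"

end

theory Submission
  imports Defs "Jordan_Normal_Form.Determinant"
begin



definition mon :: "('a \<times> nat) set \<Rightarrow> ('a \<Rightarrow> nat \<Rightarrow> real) \<Rightarrow> ('a \<times> nat \<Rightarrow> nat) \<Rightarrow> real" where
  "mon X q m = (\<Prod>x\<in>X. (\<lambda>(v, i). q v i) x ^ m x)"

definition polyfun :: "('a \<times> nat) set \<Rightarrow> (('a \<Rightarrow> nat \<Rightarrow> real) \<Rightarrow> real) \<Rightarrow> bool" where
  "polyfun X F \<longleftrightarrow> (\<exists>S c. finite S \<and> (\<forall>m\<in>S. \<forall>x. m x \<noteq> 0 \<longrightarrow> x \<in> X) \<and>
      (\<forall>q. F q = (\<Sum>m\<in>S. of_rat (c m) * mon X q m)))"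

lemma polyfun_const: "polyfun X (\<lambda>q. of_rat r)"
  unfolding polyfun_def
  by (rule exI[of _ "{\<lambda>_. 0}"], rule exI[of _ "\<lambda>_. r"]) (auto simp: mon_def)

lemma polyfun_var:
  assumes "finite X" "(v, i) \<in> X"
  shows "polyfun X (\<lambda>q. q v i)"
  unfolding polyfun_def
proof (rule exI[of _ "{\<lambda>x. if x = (v, i) then 1 else 0}"], rule exI[of _ "\<lambda>_. 1"], intro conjI allI)
  fix q :: "'a \<Rightarrow> nat \<Rightarrow> real"
  have "mon X q (\<lambda>x. if x = (v, i) then 1 else 0) = (\<Prod>x\<in>X. if x = (v,i) then (\<lambda>(v, i). q v i) x else 1)"
    unfolding mon_def by (rule prod.cong) auto
  also have "\<dots> = q v i" using assms by (subst prod.delta) auto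
  finally show "q v i = (\<Sum>m\<in>{\<lambda>x. if x = (v, i) then 1 else 0}. of_rat 1 * mon X q m)" by simp
qed (use assms in auto)

lemma polyfun_add:
  assumes "polyfun X F" "polyfun X G"
  shows "polyfun X (\<lambda>q. F q + G q)"
proof -
  obtain S1 c1 where 1: "finite S1" "\<forall>m\<in>S1. \<forall>x. m x \<noteq> 0 \<longrightarrow> x \<in> X" "\<forall>q. F q = (\<Sum>m\<in>S1. of_rat (c1 m) * mon X q m)"
    using assms(1) unfolding polyfun_def by blast
  obtain S2 c2 where 2: "finite S2" "\<forall>m\<in>S2. \<forall>x. m x \<noteq> 0 \<longrightarrow> x \<in> X" "\<forall>q. G q = (\<Sum>m\<in>S2. of_rat (c2 m) * mon X q m)"
    using assms(2) unfolding polyfun_def by blast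
  define c where "c m = (if m \<in> S1 then c1 m else 0) + (if m \<in> S2 then c2 m else 0)" for m
  show ?thesis unfolding polyfun_def
  proof (rule exI[of _ "S1 \<union> S2"], rule exI[of _ c], intro conjI allI)
    fix q
    have a: "(\<Sum>m\<in>S1 \<union> S2. of_rat (if m \<in> S1 then c1 m else 0) * mon X q m) = (\<Sum>m\<in>S1. of_rat (c1 m) * mon X q m)"
      by (rule sum.mono_neutral_cong_right) (use 1 2 in auto)
    have b: "(\<Sum>m\<in>S1 \<union> S2. of_rat (if m \<in> S2 then c2 m else 0) * mon X q m) = (\<Sum>m\<in>S2. of_rat (c2 m) * mon X q m)"
      by (rule sum.mono_neutral_cong_right) (use 1 2 in auto)
    show "F q + G q = (\<Sum>m\<in>S1 \<union> S2. of_rat (c m) * mon X q m)"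
      unfolding c_def of_rat_add distrib_right sum.distrib a b using 1 2 by simp
  qed (use 1 2 in auto)
qed

lemma polyfun_uminus:
  assumes "polyfun X F"
  shows "polyfun X (\<lambda>q. - F q)"
proof -
  obtain S1 c1 where 1: "finite S1" "\<forall>m\<in>S1. \<forall>x. m x \<noteq> 0 \<longrightarrow> x \<in> X" "\<forall>q. F q = (\<Sum>m\<in>S1. of_rat (c1 m) * mon X q m)"
    using assms(1) unfolding polyfun_def by blast
  show ?thesis unfolding polyfun_def
    by (rule exI[of _ S1], rule exI[of _ "\<lambda>m. - c1 m"]) (use 1 in \<open>auto simp: of_rat_minus sum_negf\<close>)
qed

lemma mon_add: "finite X \<Longrightarrow> mon X q (\<lambda>x. a x + b x) = mon X q a * mon X q b"
  unfolding mon_def by (simp add: power_add prod.distrib)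

lemma polyfun_mult:
  assumes "finite X" "polyfun X F" "polyfun X G"
  shows "polyfun X (\<lambda>q. F q * G q)"
proof -
  obtain S1 c1 where 1: "finite S1" "\<forall>m\<in>S1. \<forall>x. m x \<noteq> 0 \<longrightarrow> x \<in> X" "\<forall>q. F q = (\<Sum>m\<in>S1. of_rat (c1 m) * mon X q m)"
    using assms(2) unfolding polyfun_def by blast
  obtain S2 c2 where 2: "finite S2" "\<forall>m\<in>S2. \<forall>x. m x \<noteq> 0 \<longrightarrow> x \<in> X" "\<forall>q. G q = (\<Sum>m\<in>S2. of_rat (c2 m) * mon X q m)"
    using assms(3) unfolding polyfun_def by blast
  define pl where "pl = (\<lambda>(a::'a \<times> nat \<Rightarrow> nat, b::'a \<times> nat \<Rightarrow> nat). (\<lambda>x. a x + b x))"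
  define S where "S = pl ` (S1 \<times> S2)"
  define c where "c m = (\<Sum>z\<in>{z \<in> S1 \<times> S2. pl z = m}. c1 (fst z) * c2 (snd z))" for m
  show ?thesis unfolding polyfun_def
  proof (rule exI[of _ S], rule exI[of _ c], intro conjI allI)
    show "finite S" unfolding S_def using 1 2 by auto
    show "\<forall>m\<in>S. \<forall>x. m x \<noteq> 0 \<longrightarrow> x \<in> X"
      unfolding S_def pl_def using 1 2 by fastforce
    fix q
    let ?g = "\<lambda>z. of_rat (c1 (fst z) * c2 (snd z)) * mon X q (pl z)"
    have "F q * G q = (\<Sum>a\<in>S1. \<Sum>b\<in>S2. (of_rat (c1 a) * mon X q a) * (of_rat (c2 b) * mon X q b))"
      using 1 2 by (simp add: sum_product)
    also have "\<dots> = (\<Sum>a\<in>S1. \<Sum>b\<in>S2. ?g (a, b))"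
      using assms(1) by (simp add: pl_def mon_add of_rat_mult mult_ac)
    also have "\<dots> = (\<Sum>z\<in>S1 \<times> S2. ?g z)"
      by (simp add: sum.cartesian_product split_beta)
    also have "\<dots> = (\<Sum>m\<in>S. \<Sum>z\<in>{z \<in> S1 \<times> S2. pl z = m}. ?g z)"
      by (rule sum.group[symmetric]) (use 1 2 in \<open>auto simp: S_def\<close>)
    also have "\<dots> = (\<Sum>m\<in>S. of_rat (c m) * mon X q m)"
    proof (rule sum.cong[OF refl])
      fix m assume "m \<in> S"
      have "(\<Sum>z\<in>{z \<in> S1 \<times> S2. pl z = m}. ?g z) = (\<Sum>z\<in>{z \<in> S1 \<times> S2. pl z = m}. of_rat (c1 (fst z) * c2 (snd z)) * mon X q m)"
        by (rule sum.cong) auto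
      also have "\<dots> = of_rat (c m) * mon X q m"
        unfolding c_def of_rat_sum sum_distrib_right by simp
      finally show "(\<Sum>z\<in>{z \<in> S1 \<times> S2. pl z = m}. ?g z) = of_rat (c m) * mon X q m" .
    qed
    finally show "F q * G q = (\<Sum>m\<in>S. of_rat (c m) * mon X q m)" .
  qed
qed

lemma polyfun_diff:
  assumes "polyfun X F" "polyfun X G"
  shows "polyfun X (\<lambda>q. F q - G q)"
  using polyfun_add[OF assms(1) polyfun_uminus[OF assms(2)]] by simp

lemma polyfun_zero: "polyfun X (\<lambda>q. 0)"
  using polyfun_const[of X 0] by simp

lemma polyfun_one: "polyfun X (\<lambda>q. 1)"
  using polyfun_const[of X 1] by simp

lemma polyfun_sum:
  assumes "finite X" "finite I" "\<And>i. i \<in> I \<Longrightarrow> polyfun X (F i)"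
  shows "polyfun X (\<lambda>q. \<Sum>i\<in>I. F i q)"
  using assms(2,3)
proof (induction I rule: finite_induct)
  case empty then show ?case by (simp add: polyfun_zero)
next
  case (insert a I)
  then show ?case by (simp add: polyfun_add)
qed

lemma polyfun_prod:
  assumes "finite X" "finite I" "\<And>i. i \<in> I \<Longrightarrow> polyfun X (F i)"
  shows "polyfun X (\<lambda>q. \<Prod>i\<in>I. F i q)"
  using assms(2,3)
proof (induction I rule: finite_induct)
  case empty then show ?case by (simp add: polyfun_one)
next
  case (insert a I)
  then show ?case by (simp add: polyfun_mult[OF assms(1)])
qed

lemma polyfun_cong: "polyfun X F \<Longrightarrow> (\<And>q. F q = G q) \<Longrightarrow> polyfun X G"
proof -
  assume "polyfun X F" "\<And>q. F q = G q"
  then have "F = G" by auto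
  with \<open>polyfun X F\<close> show ?thesis by simp
qed

lemma polyfun_generic:
  assumes "generic d V p" "polyfun (V \<times> {..<d}) F" "F p = 0"
  shows "F q = 0"
proof -
  let ?X = "V \<times> {..<d}"
  obtain S c where 1: "finite S" "\<forall>m\<in>S. \<forall>x. m x \<noteq> 0 \<longrightarrow> x \<in> ?X" "\<forall>q. F q = (\<Sum>m\<in>S. of_rat (c m) * mon ?X q m)"
    using assms(2) unfolding polyfun_def by blast
  define c' where "c' m = (if m \<in> S then c m else 0)" for m
  have sub: "{m. c' m \<noteq> 0} \<subseteq> S" unfolding c'_def by auto
  have "(\<Sum>m\<in>{m. c' m \<noteq> 0}. of_rat (c' m) * (\<Prod>x\<in>?X. (\<lambda>(v, i). p v i) x ^ m x)) = (\<Sum>m\<in>S. of_rat (c m) * mon ?X p m)"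
    by (rule sum.mono_neutral_cong_left) (use 1 sub in \<open>auto simp: c'_def mon_def\<close>)
  also have "\<dots> = 0" using 1 assms(3) by simp
  finally have "\<forall>m. c' m = 0"
    using assms(1) unfolding generic_def alg_indep_rat_def
    using finite_subset[OF sub 1(1)] 1(2) sub by blast
  then have "\<forall>m\<in>S. c m = 0" unfolding c'_def by (metis (full_types))
  then show ?thesis using 1 by simp
qed

lemma polyfun_tendsto:
  assumes "polyfun X F" "\<forall>v i. (v, i) \<in> X \<longrightarrow> (\<lambda>n. Q n v i) \<longlonglongrightarrow> q v i"
  shows "(\<lambda>n. F (Q n)) \<longlonglongrightarrow> F q"
proof -
  obtain S c where 1: "finite S" "\<forall>q. F q = (\<Sum>m\<in>S. of_rat (c m) * mon X q m)"
    using assms(1) unfolding polyfun_def by blast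
  have "(\<lambda>n. mon X (Q n) m) \<longlonglongrightarrow> mon X q m" for m
    unfolding mon_def
    by (rule tendsto_prod, rule tendsto_power) (use assms(2) in auto)
  then have "(\<lambda>n. \<Sum>m\<in>S. of_rat (c m) * mon X (Q n) m) \<longlonglongrightarrow> (\<Sum>m\<in>S. of_rat (c m) * mon X q m)"
    by (intro tendsto_sum tendsto_mult tendsto_const) auto
  then show ?thesis using 1 by simp
qed




definition ind :: "'a \<Rightarrow> 'a \<Rightarrow> real" where "ind a x = (if x = a then 1 else 0)"

definition pairs :: "'a set \<Rightarrow> 'a set set" where
  "pairs V = {{a, b} | a b. a \<in> V \<and> b \<in> V \<and> a \<noteq> b}"

definition ip :: "'a set \<Rightarrow> nat \<Rightarrow> ('a \<Rightarrow> nat \<Rightarrow> real) \<Rightarrow> ('a \<Rightarrow> nat \<Rightarrow> real) \<Rightarrow> real" where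
  "ip V d f g = (\<Sum>x\<in>V. \<Sum>j<d. f x j * g x j)"

lemma rig_row_pair:
  assumes "a \<noteq> b"
  shows "rig_row d q {a, b} x j = (if j < d then (ind a x - ind b x) * (q a j - q b j) else 0)"
proof -
  have t1: "(THE y. {a, b} = {a, y}) = b"
    by (rule the_equality) (auto simp: doubleton_eq_iff)
  have t2: "(THE y. {a, b} = {b, y}) = a"
    by (rule the_equality) (auto simp: doubleton_eq_iff)
  show ?thesis unfolding rig_row_def ind_def using assms t1 t2 by auto
qed

lemma rig_row_pair': "a \<noteq> b \<Longrightarrow> rig_row d q {a, b} x j =
   (if j < d then (if x = a then q a j - q b j else if x = b then q b j - q a j else 0) else 0)"
  by (simp add: rig_row_pair ind_def)

lemma pairsE: "e \<in> pairs V \<Longrightarrow> (\<And>a b. e = {a, b} \<Longrightarrow> a \<in> V \<Longrightarrow> b \<in> V \<Longrightarrow> a \<noteq> b \<Longrightarrow> P) \<Longrightarrow> P"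
  unfolding pairs_def by blast

lemma pairsI: "a \<in> V \<Longrightarrow> b \<in> V \<Longrightarrow> a \<noteq> b \<Longrightarrow> {a, b} \<in> pairs V"
  unfolding pairs_def by blast

lemma row_support: "e \<in> pairs V \<Longrightarrow> x \<notin> V \<or> \<not> j < d \<Longrightarrow> rig_row d q e x j = 0"
  by (erule pairsE) (auto simp: rig_row_pair ind_def)

lemma sum_ind: "finite V \<Longrightarrow> a \<in> V \<Longrightarrow> (\<Sum>x\<in>V. f x * ind a x) = f a"
proof -
  assume "finite V" "a \<in> V"
  have "(\<Sum>x\<in>V. f x * ind a x) = (\<Sum>x\<in>V. if x = a then f x else 0)"
    by (rule sum.cong) (auto simp: ind_def)
  also have "\<dots> = f a" using \<open>finite V\<close> \<open>a \<in> V\<close> by (simp add: sum.delta')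
  finally show ?thesis .
qed

lemma ip_row:
  assumes "finite V" "a \<in> V" "b \<in> V" "a \<noteq> b"
  shows "ip V d m (rig_row d r {a, b}) = (\<Sum>j<d. (m a j - m b j) * (r a j - r b j))"
proof -
  have "ip V d m (rig_row d r {a, b}) = (\<Sum>x\<in>V. \<Sum>j<d. m x j * ((ind a x - ind b x) * (r a j - r b j)))"
    unfolding ip_def using assms by (simp add: rig_row_pair)
  also have "\<dots> = (\<Sum>j<d. \<Sum>x\<in>V. (m x j * ind a x - m x j * ind b x) * (r a j - r b j))"
    by (subst sum.swap) (simp add: algebra_simps)
  also have "\<dots> = (\<Sum>j<d. ((\<Sum>x\<in>V. m x j * ind a x) - (\<Sum>x\<in>V. m x j * ind b x)) * (r a j - r b j))"
    by (simp add: left_diff_distrib sum_distrib_right sum_subtractf)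
  also have "\<dots> = (\<Sum>j<d. (m a j - m b j) * (r a j - r b j))"
    using assms by (simp add: sum_ind)
  finally show ?thesis .
qed

lemma ip_sym: "ip V d f g = ip V d g f"
  unfolding ip_def by (simp add: mult.commute)

lemma ip_lin:
  assumes "finite S"
  shows "ip V d m (\<lambda>x j. \<Sum>e\<in>S. c e * r e x j) = (\<Sum>e\<in>S. c e * ip V d m (r e))"
  unfolding ip_def
  by (simp add: sum_distrib_left sum_distrib_right mult_ac sum.swap[of _ S])

lemma ip_lin_left:
  assumes "finite S"
  shows "ip V d (\<lambda>x j. \<Sum>e\<in>S. c e * r e x j) m = (\<Sum>e\<in>S. c e * ip V d (r e) m)"
  using ip_lin[OF assms, of V d m c r] by (simp add: ip_sym)

lemma ip_self_zero:
  assumes "finite V" "ip V d f f = 0" "x \<in> V" "j < d"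
  shows "f x j = 0"
proof -
  have "(\<Sum>x\<in>V. \<Sum>j<d. f x j * f x j) = 0" using assms(2) unfolding ip_def .
  then have "\<forall>x\<in>V. (\<Sum>j<d. f x j * f x j) = 0"
    using assms(1) by (subst (asm) sum_nonneg_eq_0_iff) (auto intro: sum_nonneg)
  then have "(\<Sum>j<d. f x j * f x j) = 0" using assms(3) by blast
  then have "\<forall>j<d. f x j * f x j = 0"
    by (subst (asm) sum_nonneg_eq_0_iff) auto
  then show ?thesis using assms(4) by auto
qed

lemma mat_vec_idx:
  assumes "i < n" "v \<in> carrier_vec n"
  shows "vec_index (Matrix.mat n n f *\<^sub>v v) i = (\<Sum>l<n. f (i, l) * vec_index v l)"
  using assms by (simp add: scalar_prod_def lessThan_atLeast0)

lemma gram_det_iff: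
  fixes r :: "nat \<Rightarrow> 'a \<Rightarrow> nat \<Rightarrow> real"
  assumes V: "finite V" and supp: "\<And>i x j. i < k \<Longrightarrow> x \<notin> V \<or> \<not> j < d \<Longrightarrow> r i x j = 0"
  shows "Determinant.det (Matrix.mat k k (\<lambda>(i, l). ip V d (r i) (r l))) \<noteq> 0 \<longleftrightarrow>
         (\<forall>c. (\<forall>x j. (\<Sum>i<k. c i * r i x j) = 0) \<longrightarrow> (\<forall>i<k. c i = 0))"
  (is "?D \<noteq> 0 \<longleftrightarrow> ?I")
proof -
  let ?G = "Matrix.mat k k (\<lambda>(i, l). ip V d (r i) (r l))"
  have G: "?G \<in> carrier_mat k k" by simp
  have Gv: "vec_index (?G *\<^sub>v v) i = ip V d (r i) (\<lambda>x j. \<Sum>l<k. vec_index v l * r l x j)"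
    if "i < k" "v \<in> carrier_vec k" for i v
  proof -
    have "vec_index (?G *\<^sub>v v) i = (\<Sum>l<k. ip V d (r i) (r l) * vec_index v l)"
      using that by (subst mat_vec_idx) (auto intro!: sum.cong)
    also have "\<dots> = ip V d (r i) (\<lambda>x j. \<Sum>l<k. vec_index v l * r l x j)"
      by (subst ip_lin) (auto simp: mult.commute)
    finally show ?thesis .
  qed
  show ?thesis
  proof
    assume D: "?D \<noteq> 0"
    show ?I
    proof (rule allI, rule impI)
      fix c assume c: "\<forall>x j. (\<Sum>i<k. c i * r i x j) = 0"
      let ?v = "Matrix.vec k c"
      have "?G *\<^sub>v ?v = 0\<^sub>v k"
      proof (rule eq_vecI)
        fix i assume "i < dim_vec (0\<^sub>v k :: real Matrix.vec)"
        then have i: "i < k" by simp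
        have "(\<lambda>x j. \<Sum>l<k. vec_index ?v l * r l x j) = (\<lambda>x j. \<Sum>l<k. c l * r l x j)"
          by (intro ext sum.cong) auto
        then show "vec_index (?G *\<^sub>v ?v) i = vec_index (0\<^sub>v k) i"
          using Gv[OF i] i c by (simp add: ip_def)
      qed simp
      moreover have "?v \<in> carrier_vec k" by simp
      ultimately have "?v = 0\<^sub>v k" using D det_0_iff_vec_prod_zero[OF G] by blast
      then show "\<forall>i<k. c i = 0"
        by (metis index_vec index_zero_vec(1))
    qed
  next
    assume I: ?I
    show "?D \<noteq> 0"
    proof
      assume "?D = 0"
      then obtain v where v: "v \<in> carrier_vec k" "v \<noteq> 0\<^sub>v k" "?G *\<^sub>v v = 0\<^sub>v k"
        using det_0_iff_vec_prod_zero[OF G] by auto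
      define s where "s = (\<lambda>x j. \<Sum>l<k. vec_index v l * r l x j)"
      have "ip V d s s = (\<Sum>i<k. vec_index v i * ip V d (r i) s)"
        unfolding s_def by (rule ip_lin_left) simp
      also have "\<dots> = (\<Sum>i<k. vec_index v i * vec_index (?G *\<^sub>v v) i)"
        by (rule sum.cong) (use Gv v(1) in \<open>auto simp: s_def\<close>)
      also have "\<dots> = 0" using v(3) by simp
      finally have ss: "ip V d s s = 0" .
      have "\<forall>x j. s x j = 0"
      proof (intro allI)
        fix x j
        show "s x j = 0"
        proof (cases "x \<in> V \<and> j < d")
          case True then show ?thesis using ip_self_zero[OF V ss] by blast
        next
          case False then show ?thesis unfolding s_def using supp by simp
        qed
      qed
      then have "\<forall>i<k. vec_index v i = 0" using I unfolding s_def by blast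
      then have "v = 0\<^sub>v k" using v(1) by (intro eq_vecI) auto
      then show False using v(2) by simp
    qed
  qed
qed

definition gram :: "'a set \<Rightarrow> nat \<Rightarrow> ('a \<Rightarrow> nat \<Rightarrow> real) \<Rightarrow> (nat \<Rightarrow> 'a set) \<Rightarrow> nat \<Rightarrow> real mat" where
  "gram V d q h k = Matrix.mat k k (\<lambda>(i, l). ip V d (rig_row d q (h i)) (rig_row d q (h l)))"

lemma indep_iff_det:
  assumes V: "finite V" and F: "F \<subseteq> pairs V" and h: "bij_betw h {0..<k} F"
  shows "rows_indep d q F \<longleftrightarrow> Determinant.det (gram V d q h k) \<noteq> 0"
proof -
  have fin: "finite F" using h bij_betw_finite by blast
  have supp: "\<And>i x j. i < k \<Longrightarrow> x \<notin> V \<or> \<not> j < d \<Longrightarrow> rig_row d q (h i) x j = 0"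
    using h F row_support by (metis atLeastLessThan_iff bij_betwE subsetD zero_le)
  have reidx: "(\<Sum>e\<in>F. c e * rig_row d q e x j) = (\<Sum>i<k. c (h i) * rig_row d q (h i) x j)" for c x j
    using sum.reindex_bij_betw[OF h, of "\<lambda>e. c e * rig_row d q e x j"] by (simp add: lessThan_atLeast0)
  have "rows_indep d q F \<longleftrightarrow> (\<forall>c. (\<forall>x j. (\<Sum>i<k. c i * rig_row d q (h i) x j) = 0) \<longrightarrow> (\<forall>i<k. c i = 0))"
  proof
    assume R: "rows_indep d q F"
    show "\<forall>c. (\<forall>x j. (\<Sum>i<k. c i * rig_row d q (h i) x j) = 0) \<longrightarrow> (\<forall>i<k. c i = 0)"
    proof (rule allI, rule impI)
      fix c assume c: "\<forall>x j. (\<Sum>i<k. c i * rig_row d q (h i) x j) = 0"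
      define c' where "c' e = c (inv_into {0..<k} h e)" for e
      have hc: "c' (h i) = c i" if "i < k" for i
        unfolding c'_def using h that by (simp add: bij_betw_def)
      have "(\<Sum>i<k. c' (h i) * rig_row d q (h i) x j) = 0" for x j
        using c by (simp add: hc)
      then have "\<forall>e\<in>F. c' e = 0" using R unfolding rows_indep_def reidx by blast
      then show "\<forall>i<k. c i = 0" using hc h by (metis atLeastLessThan_iff bij_betwE zero_le)
    qed
  next
    assume R: "\<forall>c. (\<forall>x j. (\<Sum>i<k. c i * rig_row d q (h i) x j) = 0) \<longrightarrow> (\<forall>i<k. c i = 0)"
    show "rows_indep d q F" unfolding rows_indep_def
    proof (intro conjI fin allI impI ballI)
      fix c e assume c: "\<forall>x j. (\<Sum>e\<in>F. c e * rig_row d q e x j) = 0" and e: "e \<in> F"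
      have "\<forall>i<k. c (h i) = 0" using spec[OF R, of "\<lambda>i. c (h i)"] c unfolding reidx by simp
      then show "c e = 0" using e h
        by (metis atLeastLessThan_iff bij_betw_iff_bijections)
    qed
  qed
  also have "\<dots> \<longleftrightarrow> Determinant.det (gram V d q h k) \<noteq> 0"
    unfolding gram_def by (rule gram_det_iff[OF V supp, symmetric])
  finally show ?thesis .
qed




lemma polyfun_det:
  assumes X: "finite X" and f: "\<And>i l. i < k \<Longrightarrow> l < k \<Longrightarrow> polyfun X (f i l)"
  shows "polyfun X (\<lambda>q. Determinant.det (Matrix.mat k k (\<lambda>(i, l). f i l q)))"
proof -
  have eq: "Determinant.det (Matrix.mat k k (\<lambda>(i, l). f i l q)) =
     (\<Sum>p\<in>{p. p permutes {0..<k}}. of_int (sign p) * (\<Prod>i\<in>{0..<k}. f i (p i) q))" for q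
  proof -
    have "Determinant.det (Matrix.mat k k (\<lambda>(i, l). f i l q)) =
      (\<Sum>p\<in>{p. p permutes {0..<k}}. of_int (sign p) * (\<Prod>i = 0..<k. Matrix.mat k k (\<lambda>(i, l). f i l q) $$ (i, p i)))"
      by (rule det_def') simp
    also have "\<dots> = (\<Sum>p\<in>{p. p permutes {0..<k}}. of_int (sign p) * (\<Prod>i\<in>{0..<k}. f i (p i) q))"
    proof (rule sum.cong[OF refl])
      fix p assume "p \<in> {p. p permutes {0..<k}}"
      then have "\<And>i. i < k \<Longrightarrow> p i < k" using permutes_in_image by fastforce
      then show "of_int (sign p) * (\<Prod>i = 0..<k. Matrix.mat k k (\<lambda>(i, l). f i l q) $$ (i, p i)) =
          of_int (sign p) * (\<Prod>i\<in>{0..<k}. f i (p i) q)"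
        by (intro arg_cong2[where f="(*)"] refl prod.cong) auto
    qed
    finally show ?thesis .
  qed
  have "polyfun X (\<lambda>q. \<Sum>p\<in>{p. p permutes {0..<k}}. of_int (sign p) * (\<Prod>i\<in>{0..<k}. f i (p i) q))"
  proof (rule polyfun_sum[OF X])
    show "finite {p. p permutes {0..<k}}" by (rule finite_permutations) simp
    fix p assume p: "p \<in> {p. p permutes {0..<k}}"
    then have pk: "\<And>i. i < k \<Longrightarrow> p i < k" using permutes_in_image by fastforce
    have c: "polyfun X (\<lambda>q. of_int (sign p))"
      using polyfun_const[of X "of_int (sign p)"] by simp
    show "polyfun X (\<lambda>q. of_int (sign p) * (\<Prod>i\<in>{0..<k}. f i (p i) q))"
      by (rule polyfun_mult[OF X c], rule polyfun_prod[OF X]) (use f pk in auto)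
  qed
  then show ?thesis by (rule polyfun_cong) (simp add: eq)
qed

lemma polyfun_if: "polyfun X F \<Longrightarrow> polyfun X G \<Longrightarrow> polyfun X (\<lambda>q. if P then F q else G q)"
  by (cases P) auto

lemma polyfun_row:
  assumes V: "finite V" and e: "e \<in> pairs V"
  shows "polyfun (V \<times> {..<d}) (\<lambda>q. rig_row d q e x j)"
proof -
  obtain a b where ab: "e = {a, b}" "a \<in> V" "b \<in> V" "a \<noteq> b" using e by (rule pairsE)
  have X: "finite (V \<times> {..<d})" using V by simp
  have "polyfun (V \<times> {..<d}) (\<lambda>q. if j < d then (if x = a then q a j - q b j else if x = b then q b j - q a j else 0) else 0)"
  proof (cases "j < d")
    case True
    then have va: "polyfun (V \<times> {..<d}) (\<lambda>q. q a j)" "polyfun (V \<times> {..<d}) (\<lambda>q. q b j)"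
      using ab by (auto intro!: polyfun_var[OF X])
    show ?thesis
      by (intro polyfun_if polyfun_diff va polyfun_zero)
  qed (simp add: polyfun_zero)
  then show ?thesis by (rule polyfun_cong) (simp add: ab rig_row_pair')
qed

lemma polyfun_ip:
  assumes V: "finite V" and F: "\<And>x j. x \<in> V \<Longrightarrow> j < d \<Longrightarrow> polyfun (V \<times> {..<d}) (\<lambda>q. F q x j)"
    and G: "\<And>x j. x \<in> V \<Longrightarrow> j < d \<Longrightarrow> polyfun (V \<times> {..<d}) (\<lambda>q. G q x j)"
  shows "polyfun (V \<times> {..<d}) (\<lambda>q. ip V d (F q) (G q))"
  unfolding ip_def using V F G
  by (intro polyfun_sum polyfun_mult) auto

lemma polyfun_gram:
  assumes V: "finite V" and h: "\<And>i. i < k \<Longrightarrow> h i \<in> pairs V"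
  shows "polyfun (V \<times> {..<d}) (\<lambda>q. Determinant.det (gram V d q h k))"
  unfolding gram_def
  using V h by (intro polyfun_det polyfun_ip polyfun_row) auto

lemma finite_pairs: "finite V \<Longrightarrow> finite (pairs V)"
proof -
  assume "finite V"
  have "pairs V \<subseteq> Pow V" unfolding pairs_def by auto
  then show ?thesis using \<open>finite V\<close> finite_subset by blast
qed

lemma indep_transfer:
  assumes gen: "generic d V p" and V: "finite V" and F: "F \<subseteq> pairs V"
    and ind: "rows_indep d q F"
  shows "rows_indep d p F"
proof -
  have fin: "finite F" using F finite_pairs[OF V] finite_subset by blast
  obtain h where h: "bij_betw h {0..<card F} F" using ex_bij_betw_nat_finite[OF fin] by blast
  have hp: "\<And>i. i < card F \<Longrightarrow> h i \<in> pairs V" using h F bij_betwE by fastforce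
  have "Determinant.det (gram V d q h (card F)) \<noteq> 0" using ind indep_iff_det[OF V F h] by blast
  moreover have pg: "polyfun (V \<times> {..<d}) (\<lambda>q. Determinant.det (gram V d q h (card F)))"
    by (rule polyfun_gram[OF V hp])
  ultimately have "Determinant.det (gram V d p h (card F)) \<noteq> 0"
    using polyfun_generic[OF gen pg] by blast
  then show ?thesis using indep_iff_det[OF V F h] by blast
qed

lemma dot_sqdist:
  "(\<Sum>j<d. (q c j - q g j) * (q a j - q b j)) =
   (sqdist d (q c) (q b) + sqdist d (q g) (q a) - sqdist d (q c) (q a) - sqdist d (q g) (q b)) / 2"
proof -
  have "(sqdist d (q c) (q b) + sqdist d (q g) (q a) - sqdist d (q c) (q a) - sqdist d (q g) (q b)) / 2 =
     (\<Sum>j<d. ((q c j - q b j)^2 + (q g j - q a j)^2 - (q c j - q a j)^2 - (q g j - q b j)^2) / 2)"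
    unfolding sqdist_def by (simp only: sum_divide_distrib[symmetric] sum.distrib sum_subtractf)
  also have "\<dots> = (\<Sum>j<d. (q c j - q g j) * (q a j - q b j))"
    by (rule sum.cong) (simp_all add: field_simps power2_eq_square)
  finally show ?thesis by simp
qed

lemma ip_rows:
  assumes V: "finite V" and "a \<in> V" "b \<in> V" "a \<noteq> b" "c \<noteq> g"
  shows "ip V d (rig_row d q {a, b}) (rig_row d q {c, g}) =
    ((ind c a - ind g a) - (ind c b - ind g b)) * (\<Sum>j<d. (q c j - q g j) * (q a j - q b j))"
proof -
  have "ip V d (rig_row d q {a, b}) (rig_row d q {c, g}) = ip V d (rig_row d q {c, g}) (rig_row d q {a, b})"
    by (rule ip_sym)
  also have "\<dots> = (\<Sum>j<d. (rig_row d q {c, g} a j - rig_row d q {c, g} b j) * (q a j - q b j))"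
    using assms by (simp add: ip_row)
  also have "\<dots> = ((ind c a - ind g a) - (ind c b - ind g b)) * (\<Sum>j<d. (q c j - q g j) * (q a j - q b j))"
    unfolding sum_distrib_left
    by (rule sum.cong) (use assms in \<open>auto simp: rig_row_pair algebra_simps\<close>)
  finally show ?thesis .
qed

definition congr :: "nat \<Rightarrow> 'a set \<Rightarrow> ('a \<Rightarrow> nat \<Rightarrow> real) \<Rightarrow> ('a \<Rightarrow> nat \<Rightarrow> real) \<Rightarrow> bool" where
  "congr d V q q' \<longleftrightarrow> (\<forall>a\<in>V. \<forall>b\<in>V. sqdist d (q a) (q b) = sqdist d (q' a) (q' b))"

lemma ip_rows_congr:
  assumes V: "finite V" and c: "congr d V q q'" and e: "e \<in> pairs V" and f: "f \<in> pairs V"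
  shows "ip V d (rig_row d q e) (rig_row d q f) = ip V d (rig_row d q' e) (rig_row d q' f)"
proof -
  obtain a b where ab: "e = {a, b}" "a \<in> V" "b \<in> V" "a \<noteq> b" using e by (rule pairsE)
  obtain c g where cg: "f = {c, g}" "c \<in> V" "g \<in> V" "c \<noteq> g" using f by (rule pairsE)
  show ?thesis
    unfolding ab cg ip_rows[OF V ab(2-4) cg(4)] dot_sqdist
    using c ab cg unfolding congr_def by simp
qed

lemma indep_congr:
  assumes V: "finite V" and c: "congr d V q q'" and F: "F \<subseteq> pairs V"
  shows "rows_indep d q F \<longleftrightarrow> rows_indep d q' F"
proof -
  have fin: "finite F" using F finite_pairs[OF V] finite_subset by blast
  obtain h where h: "bij_betw h {0..<card F} F" using ex_bij_betw_nat_finite[OF fin] by blast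
  have hp: "\<And>i. i < card F \<Longrightarrow> h i \<in> pairs V" using h F bij_betwE by fastforce
  have "gram V d q h (card F) = gram V d q' h (card F)"
    unfolding gram_def by (rule eq_matI) (auto simp: ip_rows_congr[OF V c] hp)
  then show ?thesis using indep_iff_det[OF V F h] indep_iff_det[OF V F h, of d q'] by simp
qed

lemma dep_orth:
  assumes V: "finite V" and F: "F \<subseteq> pairs V" and g: "g \<notin> F"
    and ind: "rows_indep d r F" and dep: "\<not> rows_indep d r (insert g F)"
    and m: "\<forall>f\<in>F. ip V d m (rig_row d r f) = 0"
  shows "ip V d m (rig_row d r g) = 0"
proof -
  have fin: "finite F" using F finite_pairs[OF V] finite_subset by blast
  obtain c where c: "\<forall>x j. (\<Sum>e\<in>insert g F. c e * rig_row d r e x j) = 0" and ne: "\<exists>e\<in>insert g F. c e \<noteq> 0"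
    using dep fin unfolding rows_indep_def by auto
  have c2: "\<forall>x j. c g * rig_row d r g x j + (\<Sum>e\<in>F. c e * rig_row d r e x j) = 0"
    using c fin g by simp
  have cg: "c g \<noteq> 0"
  proof
    assume "c g = 0"
    then have "\<forall>e\<in>F. c e = 0" using c2 ind unfolding rows_indep_def by simp
    then show False using ne \<open>c g = 0\<close> by auto
  qed
  have "0 = ip V d m (\<lambda>x j. \<Sum>e\<in>insert g F. c e * rig_row d r e x j)"
    using c unfolding ip_def by simp
  also have "\<dots> = (\<Sum>e\<in>insert g F. c e * ip V d m (rig_row d r e))"
    using fin by (simp add: ip_lin)
  also have "\<dots> = c g * ip V d m (rig_row d r g)"
    using fin g m by simp
  finally show ?thesis using cg by simp
qed

lemma det_inv:
  assumes A: "A \<in> carrier_mat n n" and d: "Determinant.det A \<noteq> (0::real)"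
  shows "\<exists>B\<in>carrier_mat n n. A * B = 1\<^sub>m n \<and> B * A = 1\<^sub>m n"
  using det_non_zero_imp_unit[OF A d, of undefined] unfolding Units_def ring_mat_def by auto

lemma indep_dual:
  assumes V: "finite V" and F: "F \<subseteq> pairs V" and ind: "rows_indep d r F" and g: "g \<in> F"
  shows "\<exists>m. (\<forall>f\<in>F - {g}. ip V d m (rig_row d r f) = 0) \<and> ip V d m (rig_row d r g) \<noteq> 0"
proof -
  have fin: "finite F" using F finite_pairs[OF V] finite_subset by blast
  define k where "k = card F"
  obtain h where h: "bij_betw h {0..<k} F" using ex_bij_betw_nat_finite[OF fin] k_def by blast
  let ?G = "gram V d r h k"
  have G: "?G \<in> carrier_mat k k" unfolding gram_def by simp
  have "Determinant.det ?G \<noteq> 0" using ind indep_iff_det[OF V F h] by blast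
  then obtain B where B: "B \<in> carrier_mat k k" "?G * B = 1\<^sub>m k" using det_inv[OF G] by blast
  define l0 where "l0 = inv_into {0..<k} h g"
  have l0: "l0 < k" "h l0 = g" using h g unfolding l0_def
    by (auto simp: bij_betw_def inv_into_into f_inv_into_f)
  define a where "a = B *\<^sub>v unit_vec k l0"
  have a: "a \<in> carrier_vec k" unfolding a_def using B by simp
  have Ga: "?G *\<^sub>v a = unit_vec k l0"
    unfolding a_def using B G by (simp flip: assoc_mult_mat_vec[OF G B(1), of "unit_vec k l0"])
  define m where "m = (\<lambda>x j. \<Sum>l<k. vec_index a l * rig_row d r (h l) x j)"
  have key: "ip V d m (rig_row d r (h i)) = (if i = l0 then 1 else 0)" if i: "i < k" for i
  proof -
    have "ip V d m (rig_row d r (h i)) = ip V d (rig_row d r (h i)) m" by (rule ip_sym)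
    also have "\<dots> = (\<Sum>l<k. vec_index a l * ip V d (rig_row d r (h i)) (rig_row d r (h l)))"
      unfolding m_def by (rule ip_lin) simp
    also have "\<dots> = vec_index (?G *\<^sub>v a) i"
      unfolding gram_def using i a by (subst mat_vec_idx) (auto simp: mult.commute intro!: sum.cong)
    also have "\<dots> = (if i = l0 then 1 else 0)" using Ga i l0 by simp
    finally show ?thesis .
  qed
  show ?thesis
  proof (rule exI[of _ m], intro conjI ballI)
    fix f assume f: "f \<in> F - {g}"
    have "f \<in> h ` {0..<k}" using h f by (simp add: bij_betw_def)
    then obtain i where i: "i < k" "h i = f" by auto
    then have "i \<noteq> l0" using f l0 by auto
    then show "ip V d m (rig_row d r f) = 0" using key[OF i(1)] i by simp
  next
    show "ip V d m (rig_row d r g) \<noteq> 0" using key[OF l0(1)] l0 by simp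
  qed
qed




definition dot :: "nat \<Rightarrow> (nat \<Rightarrow> real) \<Rightarrow> (nat \<Rightarrow> real) \<Rightarrow> real" where
  "dot d u w = (\<Sum>j<d. u j * w j)"

lemma dot_diff_left: "dot d (\<lambda>j. u j - v j) w = dot d u w - dot d v w"
  unfolding dot_def by (simp add: left_diff_distrib sum_subtractf)

lemma dot_diff_right: "dot d w (\<lambda>j. u j - v j) = dot d w u - dot d w v"
  unfolding dot_def by (simp add: right_diff_distrib sum_subtractf)

lemma dot_comm: "dot d u w = dot d w u"
  unfolding dot_def by (simp add: mult.commute)

lemma dot_sum_left: "finite I \<Longrightarrow> dot d (\<lambda>j. \<Sum>i\<in>I. f i * u i j) w = (\<Sum>i\<in>I. f i * dot d (u i) w)"
  unfolding dot_def by (simp add: sum_distrib_left sum_distrib_right mult_ac sum.swap[of _ I])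

lemma dot_cong: "(\<And>j. j < d \<Longrightarrow> u j = u' j) \<Longrightarrow> (\<And>j. j < d \<Longrightarrow> w j = w' j) \<Longrightarrow> dot d u w = dot d u' w'"
  unfolding dot_def by (rule sum.cong) auto

lemma mat_kernel:
  assumes "Determinant.det (Matrix.mat n n (\<lambda>(i, j). M i j)) \<noteq> (0::real)"
    and "\<And>i. i < n \<Longrightarrow> (\<Sum>j<n. M i j * z j) = 0"
  shows "\<And>j. j < n \<Longrightarrow> z j = 0"
proof -
  let ?M = "Matrix.mat n n (\<lambda>(i, j). M i j)"
  let ?v = "Matrix.vec n z"
  have "?M *\<^sub>v ?v = 0\<^sub>v n"
  proof (rule eq_vecI)
    fix i assume "i < dim_vec (0\<^sub>v n :: real Matrix.vec)"
    then have i: "i < n" by simp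
    have "vec_index (?M *\<^sub>v ?v) i = (\<Sum>j<n. M i j * z j)"
      using i by (subst mat_vec_idx) (auto intro!: sum.cong)
    then show "vec_index (?M *\<^sub>v ?v) i = vec_index (0\<^sub>v n) i" using assms(2) i by simp
  qed simp
  moreover have "?v \<in> carrier_vec n" by simp
  moreover have "?M \<in> carrier_mat n n" by simp
  ultimately have "?v = 0\<^sub>v n" using assms(1) det_0_iff_vec_prod_zero by blast
  then show "\<And>j. j < n \<Longrightarrow> z j = 0" by (metis index_vec index_zero_vec(1))
qed

lemma mat_mult_idx:
  assumes "A \<in> carrier_mat n n" "B \<in> carrier_mat n n" "i < n" "j < n"
  shows "(A * B) $$ (i, j) = (\<Sum>l<n. A $$ (i, l) * B $$ (l, j))"
  using assms by (simp add: scalar_prod_def lessThan_atLeast0)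

definition pres :: "nat \<Rightarrow> ('a \<Rightarrow> nat \<Rightarrow> real) \<Rightarrow> ('a \<Rightarrow> nat \<Rightarrow> real) \<Rightarrow> 'a \<Rightarrow> 'a \<Rightarrow> bool" where
  "pres d m P a b \<longleftrightarrow> (\<Sum>j<d. (m a j - m b j) * (P a j - P b j)) = 0"

lemma pres_refl: "pres d m P a a" unfolding pres_def by simp
lemma pres_sym: "pres d m P a b \<Longrightarrow> pres d m P b a"
  unfolding pres_def by (simp add: algebra_simps)

lemma geo:
  fixes P m :: "'a \<Rightarrow> nat \<Rightarrow> real" and k :: "nat \<Rightarrow> 'a"
  assumes C: "C \<subseteq> V" and c0: "c0 \<in> C" and kC: "\<And>i. i < d \<Longrightarrow> k i \<in> C"
    and detB: "Determinant.det (Matrix.mat d d (\<lambda>(i, j). P (k i) j - P c0 j)) \<noteq> 0"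
    and cl: "\<And>a b. a \<in> C \<Longrightarrow> b \<in> C \<Longrightarrow> pres d m P a b"
    and out: "\<And>x. x \<in> V - C \<Longrightarrow> \<exists>kx. (\<forall>i<d. kx i \<in> C \<and> pres d m P x (kx i)) \<and>
                 Determinant.det (Matrix.mat d d (\<lambda>(i, j). P (kx i) j - P x j)) \<noteq> 0"
  shows "\<And>a b. a \<in> V \<Longrightarrow> b \<in> V \<Longrightarrow> pres d m P a b"
proof -
  let ?B = "Matrix.mat d d (\<lambda>(i, j). P (k i) j - P c0 j)"
  have Bc: "?B \<in> carrier_mat d d" by simp
  obtain Bi where Bi: "Bi \<in> carrier_mat d d" "?B * Bi = 1\<^sub>m d" "Bi * ?B = 1\<^sub>m d"
    using det_inv[OF Bc detB] by blast
  define b where "b i = (\<lambda>j. P (k i) j - P c0 j)" for i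
  define m' where "m' v = (\<lambda>j. m v j - m c0 j)" for v
  define z where "z v = (\<lambda>j. P v j - P c0 j)" for v
  define \<alpha> where "\<alpha> w i = (\<Sum>j<d. Bi $$ (j, i) * w j)" for w i
  define A where "A w = (\<lambda>j. \<Sum>i<d. \<alpha> w i * m' (k i) j)" for w
  have F1: "(\<Sum>i<d. \<alpha> w i * b i l) = w l" if l: "l < d" for w l
  proof -
    have "(\<Sum>i<d. \<alpha> w i * b i l) = (\<Sum>i<d. \<Sum>j<d. w j * (Bi $$ (j, i) * ?B $$ (i, l)))"
      unfolding \<alpha>_def b_def sum_distrib_right using l
      by (intro sum.cong refl) (simp add: mult_ac)
    also have "\<dots> = (\<Sum>j<d. \<Sum>i<d. w j * (Bi $$ (j, i) * ?B $$ (i, l)))"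
      by (rule sum.swap)
    also have "\<dots> = (\<Sum>j<d. w j * (\<Sum>i<d. Bi $$ (j, i) * ?B $$ (i, l)))"
      by (simp only: sum_distrib_left)
    also have "\<dots> = (\<Sum>j<d. w j * (Bi * ?B) $$ (j, l))"
    proof (intro sum.cong refl)
      fix j assume "j \<in> {..<d}"
      then show "w j * (\<Sum>i<d. Bi $$ (j, i) * ?B $$ (i, l)) = w j * (Bi * ?B) $$ (j, l)"
        using l by (simp only: mat_mult_idx[OF Bi(1) Bc] lessThan_iff)
    qed
    also have "\<dots> = (\<Sum>j<d. if j = l then w j else 0)"
      using l Bi(3) by (intro sum.cong refl) simp
    also have "\<dots> = w l" using l by (simp add: sum.delta')
    finally show ?thesis .
  qed
  have F2: "\<alpha> (b l) i = (if i = l then 1 else 0)" if "l < d" "i < d" for l i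
  proof -
    have "\<alpha> (b l) i = (\<Sum>j<d. ?B $$ (l, j) * Bi $$ (j, i))"
      unfolding \<alpha>_def b_def using that by (intro sum.cong refl) (simp add: mult.commute)
    also have "\<dots> = (?B * Bi) $$ (l, i)" using that by (simp only: mat_mult_idx[OF Bc Bi(1)])
    also have "\<dots> = (if i = l then 1 else 0)" using that Bi(2) by simp
    finally show ?thesis .
  qed
  have \<alpha>_diff: "\<alpha> (\<lambda>j. u j - w j) i = \<alpha> u i - \<alpha> w i" for u w i
    unfolding \<alpha>_def by (simp add: right_diff_distrib sum_subtractf)
  have A_diff: "A (\<lambda>j. u j - w j) j = A u j - A w j" for u w j
    unfolding A_def \<alpha>_diff by (simp add: left_diff_distrib sum_subtractf)
  have F4: "A (b l) j = m' (k l) j" if "l < d" for l j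
  proof -
    have "A (b l) j = (\<Sum>i<d. if i = l then m' (k i) j else 0)"
      unfolding A_def using that by (intro sum.cong refl) (simp add: F2)
    then show ?thesis using that by (simp add: sum.delta')
  qed
  define s where "s i l = dot d (m' (k i)) (b l)" for i l
  have s_anti: "s i l + s l i = 0" if "i < d" "l < d" for i l
  proof -
    have p1: "pres d m P (k i) (k l)" and p2: "pres d m P (k i) c0" and p3: "pres d m P (k l) c0"
      using cl kC c0 that by auto
    have e1: "dot d (\<lambda>j. m' (k i) j - m' (k l) j) (\<lambda>j. b i j - b l j) = 0"
      using p1 unfolding pres_def dot_def m'_def b_def by simp
    have e2: "s i i = 0" using p2 unfolding pres_def dot_def m'_def b_def s_def by simp
    have e3: "s l l = 0" using p3 unfolding pres_def dot_def m'_def b_def s_def by simp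
    from e1 have "s i i - s i l - (s l i - s l l) = 0"
      unfolding s_def dot_diff_left dot_diff_right by simp
    then show ?thesis using e2 e3 by simp
  qed
  have F5: "dot d (A w) w = 0" for w
  proof -
    have "dot d (A w) w = (\<Sum>i<d. \<alpha> w i * dot d (m' (k i)) w)"
      unfolding A_def by (rule dot_sum_left) simp
    also have "\<dots> = (\<Sum>i<d. \<alpha> w i * dot d (m' (k i)) (\<lambda>j. \<Sum>l<d. \<alpha> w l * b l j))"
      by (intro sum.cong refl arg_cong2[where f="(*)"] dot_cong) (auto simp: F1)
    also have "\<dots> = (\<Sum>i<d. \<Sum>l<d. \<alpha> w i * \<alpha> w l * s i l)"
      unfolding s_def dot_comm[of d "m' _"] 
      by (simp add: dot_sum_left sum_distrib_left mult_ac)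
    finally have S: "dot d (A w) w = (\<Sum>i<d. \<Sum>l<d. \<alpha> w i * \<alpha> w l * s i l)" .
    have "(\<Sum>i<d. \<Sum>l<d. \<alpha> w i * \<alpha> w l * s i l) = (\<Sum>l<d. \<Sum>i<d. \<alpha> w i * \<alpha> w l * s i l)"
      by (rule sum.swap)
    also have "\<dots> = (\<Sum>l<d. \<Sum>i<d. - (\<alpha> w l * \<alpha> w i * s l i))"
    proof (intro sum.cong refl)
      fix l i assume "l \<in> {..<d}" "i \<in> {..<d}"
      then have "s i l = - s l i" using s_anti by (simp add: eq_neg_iff_add_eq_0)
      then show "\<alpha> w i * \<alpha> w l * s i l = - (\<alpha> w l * \<alpha> w i * s l i)" by simp
    qed
    finally have "(\<Sum>i<d. \<Sum>l<d. \<alpha> w i * \<alpha> w l * s i l) = - (\<Sum>i<d. \<Sum>l<d. \<alpha> w i * \<alpha> w l * s i l)"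
      by (simp add: sum_negf)
    then show ?thesis using S by simp
  qed
  define \<delta> where "\<delta> v = (\<lambda>j. m' v j - A (z v) j)" for v
  have zb: "z (k i) = b i" for i unfolding z_def b_def by simp
  have Ak: "A (z (k i)) j = m' (k i) j" if "i < d" for i j using F4[OF that] zb by simp
  have dotpres: "dot d (\<lambda>j. m' u j - m' v j) (\<lambda>j. z u j - z v j) = 0" if "pres d m P u v" for u v
    using that unfolding pres_def dot_def m'_def z_def by simp
  have lin0: "dot d (\<lambda>j. \<delta> u j - \<delta> v j) (\<lambda>j. z u j - z v j) = 0" if "pres d m P u v" for u v
  proof -
    have "(\<lambda>j. \<delta> u j - \<delta> v j) = (\<lambda>j. (m' u j - m' v j) - A (\<lambda>j. z u j - z v j) j)"
      unfolding \<delta>_def A_diff by (simp add: algebra_simps)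
    then have "dot d (\<lambda>j. \<delta> u j - \<delta> v j) (\<lambda>j. z u j - z v j) =
       dot d (\<lambda>j. m' u j - m' v j) (\<lambda>j. z u j - z v j) - dot d (A (\<lambda>j. z u j - z v j)) (\<lambda>j. z u j - z v j)"
      by (simp add: dot_diff_left)
    then show ?thesis using dotpres[OF that] F5 by simp
  qed
  have \<delta>k: "\<delta> (k i) j = 0" if "i < d" for i j unfolding \<delta>_def using Ak[OF that] by simp
  have \<delta>c0: "\<delta> c0 j = 0" for j
  proof -
    have "z c0 = (\<lambda>j. (\<lambda>j. 0) j - (\<lambda>j. 0) j)" unfolding z_def by simp
    then have "A (z c0) j = 0" using A_diff[of "\<lambda>j. 0" "\<lambda>j. 0" j] by simp
    then show ?thesis unfolding \<delta>_def m'_def by simp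
  qed
  have zc0: "z c0 j = 0" for j unfolding z_def by simp
  have \<delta>C: "\<delta> y j = 0" if y: "y \<in> C" and j: "j < d" for y j
  proof -
    have dz: "dot d (\<delta> y) (z y) = 0"
      using lin0[OF cl[OF y c0]] \<delta>c0 zc0 by simp
    have "(\<Sum>l<d. (P (k i) l - P c0 l) * \<delta> y l) = 0" if i: "i < d" for i
    proof -
      have "dot d (\<delta> y) (\<lambda>l. z y l - z (k i) l) = 0"
        using lin0[OF cl[OF y kC[OF i]]] \<delta>k[OF i] by simp
      then have "dot d (\<delta> y) (z (k i)) = 0" using dz by (simp add: dot_diff_right)
      then show ?thesis unfolding dot_def z_def by (simp add: mult.commute)
    qed
    then show ?thesis using mat_kernel[OF detB] j by blast
  qed
  have \<delta>V: "\<delta> x j = 0" if x: "x \<in> V" and j: "j < d" for x j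
  proof (cases "x \<in> C")
    case True then show ?thesis using \<delta>C j by blast
  next
    case False
    then obtain kx where kx: "\<forall>i<d. kx i \<in> C \<and> pres d m P x (kx i)"
      and dx: "Determinant.det (Matrix.mat d d (\<lambda>(i, j). P (kx i) j - P x j)) \<noteq> 0"
      using out x by blast
    have "(\<Sum>l<d. (P (kx i) l - P x l) * \<delta> x l) = 0" if i: "i < d" for i
    proof -
      have "dot d (\<lambda>l. \<delta> x l - \<delta> (kx i) l) (\<lambda>l. z x l - z (kx i) l) = 0"
        using lin0 kx i by blast
      then have "dot d (\<delta> x) (\<lambda>l. z x l - z (kx i) l) = 0"
        using \<delta>C kx i by (simp add: dot_def)
      then have h0: "(\<Sum>l<d. \<delta> x l * (P x l - P (kx i) l)) = 0" unfolding dot_def z_def by simp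
      have "(\<Sum>l<d. (P (kx i) l - P x l) * \<delta> x l) = - (\<Sum>l<d. \<delta> x l * (P x l - P (kx i) l))"
        by (simp add: sum_negf[symmetric] algebra_simps)
      then show ?thesis using h0 by simp
    qed
    then show ?thesis using mat_kernel[OF dx] j by blast
  qed
  fix a b assume a: "a \<in> V" and b: "b \<in> V"
  have "dot d (\<lambda>j. m' a j - m' b j) (\<lambda>j. z a j - z b j) =
        dot d (A (\<lambda>j. z a j - z b j)) (\<lambda>j. z a j - z b j)"
    by (rule dot_cong) (use \<delta>V a b in \<open>auto simp: \<delta>_def A_diff\<close>)
  also have "\<dots> = 0" by (rule F5)
  finally show "pres d m P a b" unfolding pres_def dot_def m'_def z_def by simp
qed




lemma generic_det:
  assumes gen: "generic d V p" and V: "finite V" and c: "c \<in> V"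
    and kk: "inj_on kk {..<d}" "\<And>i. i < d \<Longrightarrow> kk i \<in> V \<and> kk i \<noteq> c"
  shows "Determinant.det (Matrix.mat d d (\<lambda>(i, j). p (kk i) j - p c j)) \<noteq> 0"
proof
  assume p0: "Determinant.det (Matrix.mat d d (\<lambda>(i, j). p (kk i) j - p c j)) = 0"
  have X: "finite (V \<times> {..<d})" using V by simp
  have pf: "polyfun (V \<times> {..<d}) (\<lambda>q. Determinant.det (Matrix.mat d d (\<lambda>(i, l). (\<lambda>i l q. q (kk i) l - q c l) i l q)))"
    by (rule polyfun_det[OF X]) (use kk c in \<open>auto intro!: polyfun_diff polyfun_var[OF X]\<close>)
  define q0 where "q0 v j = (if \<exists>i<d. v = kk i \<and> j = i then 1 else 0 :: real)" for v j
  have q0k: "q0 (kk i) j = (if j = i then 1 else 0)" if "i < d" "j < d" for i j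
    using that kk(1) unfolding q0_def inj_on_def by auto
  have q0c: "q0 c j = 0" for j using kk(2) unfolding q0_def by fastforce
  have "Matrix.mat d d (\<lambda>(i, j). q0 (kk i) j - q0 c j) = 1\<^sub>m d"
    by (rule eq_matI) (auto simp: q0k q0c)
  then have "Determinant.det (Matrix.mat d d (\<lambda>(i, j). q0 (kk i) j - q0 c j)) = 1" by simp
  moreover have "Determinant.det (Matrix.mat d d (\<lambda>(i, j). q0 (kk i) j - q0 c j)) = 0"
    using polyfun_generic[OF gen pf, of q0] p0 by simp
  ultimately show False by simp
qed

lemma choose_distinct:
  assumes "finite S" "d \<le> card S"
  shows "\<exists>kk. inj_on kk {..<d} \<and> (\<forall>i<d. kk i \<in> S)"
proof -
  obtain T where T: "T \<subseteq> S" "card T = d" "finite T" using obtain_subset_with_card_n[OF assms(2)] by blast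
  obtain h where h: "bij_betw h {0..<d} T" using ex_bij_betw_nat_finite[OF T(3)] T(2) by blast
  show ?thesis
    by (rule exI[of _ h]) (use h T(1) in \<open>auto simp: bij_betw_def lessThan_atLeast0\<close>)
qed

lemma rank_transfer:
  assumes "generic d V p" "generic d V p'" "finite V" "F \<subseteq> pairs V"
  shows "rig_rank d p F = rig_rank d p' F"
proof -
  have "{F'. F' \<subseteq> F \<and> rows_indep d p F'} = {F'. F' \<subseteq> F \<and> rows_indep d p' F'}"
    using indep_transfer[OF assms(1,3)] indep_transfer[OF assms(2,3)] assms(4) by blast
  then show ?thesis unfolding rig_rank_def by simp
qed

lemma sg_pairs: "simple_graph V E \<Longrightarrow> E \<subseteq> pairs V"
  unfolding simple_graph_def pairs_def by blast

lemma sg_noloop: "simple_graph V E \<Longrightarrow> {x, x} \<notin> E"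
  unfolding simple_graph_def by (auto simp: doubleton_eq_iff)

lemma common_nbrs:
  assumes sg: "simple_graph V E" and x: "x \<in> V" and w: "w \<in> V" and xw: "x \<noteq> w" "{x, w} \<notin> E"
    and deg: "degree V E x + degree V E w + 2 \<ge> card V + d"
  shows "d \<le> card (neighbourhood V E x \<inter> neighbourhood V E w)"
proof -
  let ?Nx = "neighbourhood V E x" and ?Nw = "neighbourhood V E w"
  have V: "finite V" using sg unfolding simple_graph_def by simp
  have sub: "?Nx \<union> ?Nw \<subseteq> V - {x, w}"
    unfolding neighbourhood_def using sg_noloop[OF sg] xw by (auto simp: insert_commute)
  have "card (?Nx \<union> ?Nw) \<le> card (V - {x, w})" using sub V by (intro card_mono) auto
  also have "\<dots> = card V - 2" using x w xw V by (simp add: card_Diff_subset)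
  finally have u: "card (?Nx \<union> ?Nw) \<le> card V - 2" .
  have fin: "finite ?Nx" "finite ?Nw" using V unfolding neighbourhood_def by auto
  have "card ?Nx + card ?Nw = card (?Nx \<union> ?Nw) + card (?Nx \<inter> ?Nw)"
    using card_Un_Int[OF fin] .
  moreover have "degree V E x = card ?Nx" "degree V E w = card ?Nw"
    unfolding degree_def neighbourhood_def by simp_all
  moreover have "card V \<ge> 2" using x w xw V
    by (metis card_2_iff card_mono empty_subsetI insert_subset)
  ultimately show ?thesis using deg u by linarith
qed

lemma pres_ip:
  assumes "finite V" "a \<in> V" "b \<in> V" "a \<noteq> b"
  shows "pres d m P a b \<longleftrightarrow> ip V d m (rig_row d P {a, b}) = 0"
  using ip_row[OF assms] unfolding pres_def by simp

lemma allpairs: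
  fixes V :: "'a set" and E :: "'a set set"
  assumes sg: "simple_graph V E"
    and deg: "\<forall>u\<in>V. \<forall>v\<in>V. u \<noteq> v \<and> {u, v} \<notin> E \<longrightarrow> degree V E u + degree V E v + 2 \<ge> card V + d"
    and w: "w \<in> V"
    and lk: "\<forall>u\<in>neighbourhood V E w. \<forall>v\<in>neighbourhood V E w. u \<noteq> v \<and> {u, v} \<notin> E \<longrightarrow> R_linked d V E u v"
    and gen: "generic d V p"
  shows "\<exists>E0\<subseteq>E. rows_indep d p E0 \<and>
           (\<forall>a\<in>V. \<forall>b\<in>V. a \<noteq> b \<longrightarrow> {a, b} \<notin> E0 \<longrightarrow> \<not> rows_indep d p (insert {a, b} E0))"
proof -
  have V: "finite V" using sg unfolding simple_graph_def by simp
  have EP: "E \<subseteq> pairs V" by (rule sg_pairs[OF sg])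
  have Efin: "finite E" using EP finite_pairs[OF V] finite_subset by blast
  have Ind_fin: "finite {F'. F' \<subseteq> F \<and> rows_indep d p F'}" if "finite F" for F :: "'a set set"
    using that by (rule finite_subset[rotated, OF finite_Collect_subsets]) auto
  have Max_ge': "card F' \<le> rig_rank d p F" if "finite F" "F' \<subseteq> F" "rows_indep d p F'" for F F' :: "'a set set"
    unfolding rig_rank_def using that by (intro Max_ge) (auto intro: Ind_fin)
  let ?Ind = "{F'. F' \<subseteq> E \<and> rows_indep d p F'}"
  have "{} \<in> ?Ind" unfolding rows_indep_def by simp
  then have "rig_rank d p E \<in> card ` ?Ind"
    unfolding rig_rank_def using Ind_fin[OF Efin] by (intro Max_in) auto
  then obtain E0 where E0: "E0 \<subseteq> E" "rows_indep d p E0" "card E0 = rig_rank d p E" by auto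
  have E0fin: "finite E0" using E0(1) Efin finite_subset by blast
  have E0P: "E0 \<subseteq> pairs V" using E0(1) EP by blast
  let ?N = "neighbourhood V E w"
  have orthE: "ip V d m (rig_row d p e) = 0" if m: "\<forall>f\<in>E0. ip V d m (rig_row d p f) = 0" and e: "e \<in> E" for m e
  proof (cases "e \<in> E0")
    case True then show ?thesis using m by blast
  next
    case False
    have "\<not> rows_indep d p (insert e E0)"
    proof
      assume "rows_indep d p (insert e E0)"
      then have "card (insert e E0) \<le> rig_rank d p E" using Max_ge'[OF Efin] e E0(1) by blast
      then show False using False E0fin E0(3) by simp
    qed
    then show ?thesis using dep_orth[OF V E0P False E0(2) _ m] by blast
  qed
  obtain p0 where p0: "p0 = (SOME p. generic d V p)" by blast
  have gen0: "generic d V p0" unfolding p0 using someI[of "generic d V" p] gen by simp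
  have orthL: "ip V d m (rig_row d p {u, v}) = 0"
    if m: "\<forall>f\<in>E0. ip V d m (rig_row d p f) = 0" and u: "u \<in> ?N" and v: "v \<in> ?N" and uv: "u \<noteq> v" "{u, v} \<notin> E" for m u v
  proof -
    have uvV: "u \<in> V" "v \<in> V" using u v unfolding neighbourhood_def by auto
    have iP: "insert {u, v} E \<subseteq> pairs V" using EP pairsI[OF uvV uv(1)] by simp
    have "rank_d d V (insert {u, v} E) = rank_d d V E" using lk u v uv unfolding R_linked_def by blast
    then have "rig_rank d p0 (insert {u, v} E) = rig_rank d p0 E" unfolding rank_d_def p0 by simp
    then have rr: "rig_rank d p (insert {u, v} E) = rig_rank d p E"
      using rank_transfer[OF gen0 gen V iP] rank_transfer[OF gen0 gen V EP] by simp
    have nE0: "{u, v} \<notin> E0" using uv E0(1) by blast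
    have "\<not> rows_indep d p (insert {u, v} E0)"
    proof
      assume "rows_indep d p (insert {u, v} E0)"
      then have "card (insert {u, v} E0) \<le> rig_rank d p (insert {u, v} E)"
        using Max_ge'[of "insert {u, v} E" "insert {u, v} E0"] Efin E0(1) by blast
      then show False using nE0 E0fin E0(3) rr by simp
    qed
    then show ?thesis using dep_orth[OF V E0P nE0 E0(2) _ m] by blast
  qed
  have KER: "pres d m p a b" if m: "\<forall>f\<in>E0. ip V d m (rig_row d p f) = 0" and a: "a \<in> V" and b: "b \<in> V" for m a b
  proof -
    have pE: "pres d m p x y" if "x \<in> V" "y \<in> V" "{x, y} \<in> E" for x y
    proof (cases "x = y")
      case True then show ?thesis by (simp add: pres_refl)
    next
      case False then show ?thesis using pres_ip[OF V that(1,2) False] orthE[OF m that(3)] by simp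
    qed
    have pN: "pres d m p x y" if "x \<in> ?N" "y \<in> ?N" for x y
    proof -
      have xyV: "x \<in> V" "y \<in> V" using that unfolding neighbourhood_def by auto
      show ?thesis
      proof (cases "x = y")
        case True then show ?thesis by (simp add: pres_refl)
      next
        case False
        show ?thesis
        proof (cases "{x, y} \<in> E")
          case True then show ?thesis using pE xyV by blast
        next
          case nE: False
          then show ?thesis using pres_ip[OF V xyV False] orthL[OF m that False nE] by simp
        qed
      qed
    qed
    have pw: "pres d m p w y" if "y \<in> ?N" for y
    proof -
      have yV: "y \<in> V" and yw: "{y, w} \<in> E" using that unfolding neighbourhood_def by auto
      have "{w, y} = {y, w}" by (rule insert_commute)
      then show ?thesis using pE[OF w yV] yw by simp
    qed
    have pC: "pres d m p x y" if x: "x \<in> insert w ?N" and y: "y \<in> insert w ?N" for x y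
    proof -
      have x': "x = w \<or> x \<in> ?N" using x by simp
      have y': "y = w \<or> y \<in> ?N" using y by simp
      show ?thesis
      proof (cases "x = w")
        case True
        show ?thesis
        proof (cases "y = w")
          case True then show ?thesis using \<open>x = w\<close> by (simp add: pres_refl)
        next
          case False then show ?thesis using \<open>x = w\<close> y' pw by simp
        qed
      next
        case False
        then have xN: "x \<in> ?N" using x' by simp
        show ?thesis
        proof (cases "y = w")
          case True then show ?thesis using pw[OF xN] by (simp add: pres_sym)
        next
          case False then show ?thesis using y' pN[OF xN] by simp
        qed
      qed
    qed
    show ?thesis
    proof (cases "\<exists>x\<in>V. x \<noteq> w \<and> {x, w} \<notin> E")
      case False
      then have "V \<subseteq> insert w ?N" unfolding neighbourhood_def by blast
      then show ?thesis using pC a b by blast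
    next
      case True
      then obtain x where x: "x \<in> V" "x \<noteq> w" "{x, w} \<notin> E" by blast
      have cn: "d \<le> card (neighbourhood V E y \<inter> ?N)" if "y \<in> V - insert w ?N" for y
      proof -
        have yV: "y \<in> V" and yw: "y \<noteq> w" and yE: "{y, w} \<notin> E" using that unfolding neighbourhood_def by auto
        show ?thesis using common_nbrs[OF sg yV w yw yE deg[rule_format, OF yV w conjI[OF yw yE]]] .
      qed
      have Nfin: "finite (neighbourhood V E y)" for y using V unfolding neighbourhood_def by simp
      have xo: "x \<in> V - insert w ?N" using x unfolding neighbourhood_def by auto
      obtain k where k: "inj_on k {..<d}" "\<forall>i<d. k i \<in> neighbourhood V E x \<inter> ?N"
        using choose_distinct[OF _ cn[OF xo]] Nfin by blast
      have kN: "\<And>i. i < d \<Longrightarrow> k i \<in> ?N" using k by blast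
      have kVw: "k i \<in> V \<and> k i \<noteq> w" if i: "i < d" for i
      proof -
        have "k i \<in> V" "{k i, w} \<in> E" using kN[OF i] unfolding neighbourhood_def by auto
        moreover have "{w, w} \<notin> E" by (rule sg_noloop[OF sg])
        ultimately show ?thesis by auto
      qed
      have Csub: "insert w ?N \<subseteq> V" using w unfolding neighbourhood_def by auto
      have wC: "w \<in> insert w ?N" by simp
      have kC: "\<And>i. i < d \<Longrightarrow> k i \<in> insert w ?N" using kN by blast
      have detB: "Determinant.det (Matrix.mat d d (\<lambda>(i, j). p (k i) j - p w j)) \<noteq> 0"
        by (rule generic_det[OF gen V w k(1) kVw])
      have out: "\<exists>kx. (\<forall>i<d. kx i \<in> insert w ?N \<and> pres d m p y (kx i)) \<and>
                 Determinant.det (Matrix.mat d d (\<lambda>(i, j). p (kx i) j - p y j)) \<noteq> 0"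
        if y: "y \<in> V - insert w ?N" for y
      proof -
        obtain kx where kx: "inj_on kx {..<d}" "\<forall>i<d. kx i \<in> neighbourhood V E y \<inter> ?N"
          using choose_distinct[OF _ cn[OF y]] Nfin by blast
        have kxV: "kx i \<in> V \<and> kx i \<noteq> y" if i: "i < d" for i
        proof -
          have "kx i \<in> V" "{kx i, y} \<in> E" using kx(2) i unfolding neighbourhood_def by auto
          moreover have "{y, y} \<notin> E" by (rule sg_noloop[OF sg])
          ultimately show ?thesis by auto
        qed
        have "\<forall>i<d. kx i \<in> insert w ?N \<and> pres d m p y (kx i)"
        proof (intro allI impI conjI)
          fix i assume i: "i < d"
          show "kx i \<in> insert w ?N" using kx(2) i by blast
          have "{kx i, y} \<in> E" using kx(2) i unfolding neighbourhood_def by blast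
          moreover have "{y, kx i} = {kx i, y}" by (rule insert_commute)
          moreover have "y \<in> V" using y by blast
          ultimately show "pres d m p y (kx i)" using pE[of y "kx i"] kxV[OF i] by simp
        qed
        moreover have "Determinant.det (Matrix.mat d d (\<lambda>(i, j). p (kx i) j - p y j)) \<noteq> 0"
          using y by (intro generic_det[OF gen V _ kx(1) kxV]) auto
        ultimately show "\<exists>kx. (\<forall>i<d. kx i \<in> insert w ?N \<and> pres d m p y (kx i)) \<and>
                 Determinant.det (Matrix.mat d d (\<lambda>(i, j). p (kx i) j - p y j)) \<noteq> 0" by blast
      qed
      show ?thesis by (rule geo[OF Csub wC kC detB pC out a b])
    qed
  qed
  have fin: "\<forall>a\<in>V. \<forall>b\<in>V. a \<noteq> b \<longrightarrow> {a, b} \<notin> E0 \<longrightarrow> \<not> rows_indep d p (insert {a, b} E0)"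
  proof (intro ballI impI notI)
    fix a b assume a: "a \<in> V" and b: "b \<in> V" and ab: "a \<noteq> b" and nE0: "{a, b} \<notin> E0"
      and ind: "rows_indep d p (insert {a, b} E0)"
    have iP: "insert {a, b} E0 \<subseteq> pairs V" using E0P pairsI[OF a b ab] by simp
    have g: "{a, b} \<in> insert {a, b} E0" by simp
    obtain m where m: "\<forall>f\<in>insert {a, b} E0 - {{a, b}}. ip V d m (rig_row d p f) = 0"
      "ip V d m (rig_row d p {a, b}) \<noteq> 0"
      using indep_dual[OF V iP ind g] by (elim exE conjE) 
    have "\<forall>f\<in>E0. ip V d m (rig_row d p f) = 0"
    proof
      fix f assume f: "f \<in> E0"
      then have "f \<noteq> {a, b}" using nE0 by metis
      then have "f \<in> insert {a, b} E0 - {{a, b}}" using f by simp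
      then show "ip V d m (rig_row d p f) = 0" using m(1) by blast
    qed
    then have "pres d m p a b" using KER[OF _ a b] by blast
    then show False using m(2) pres_ip[OF V a b ab] by simp
  qed
  show ?thesis using E0(1,2) fin by blast
qed




lemma avg_identity:
  "(\<Sum>j<d. ((Q a j - r a j) - (Q b j - r b j)) * ((Q a j + r a j) / 2 - (Q b j + r b j) / 2)) =
   (sqdist d (Q a) (Q b) - sqdist d (r a) (r b)) / 2"
proof -
  have "(sqdist d (Q a) (Q b) - sqdist d (r a) (r b)) / 2 =
        (\<Sum>j<d. ((Q a j - Q b j)^2 - (r a j - r b j)^2) / 2)"
    unfolding sqdist_def by (simp only: sum_divide_distrib[symmetric] sum_subtractf)
  also have "\<dots> = (\<Sum>j<d. ((Q a j - r a j) - (Q b j - r b j)) * ((Q a j + r a j) / 2 - (Q b j + r b j) / 2))"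
    by (rule sum.cong) (simp_all add: field_simps power2_eq_square)
  finally show ?thesis by simp
qed

lemma sqdist_self: "sqdist d x x = 0"
  unfolding sqdist_def by simp

lemma local_rigid:
  fixes Q :: "nat \<Rightarrow> 'a \<Rightarrow> nat \<Rightarrow> real"
  assumes V: "finite V" and EP: "E \<subseteq> pairs V" and E0: "E0 \<subseteq> E" and ind: "rows_indep d p E0"
    and dep: "\<And>r a b. a \<in> V \<Longrightarrow> b \<in> V \<Longrightarrow> a \<noteq> b \<Longrightarrow> {a, b} \<notin> E0 \<Longrightarrow> \<not> rows_indep d r (insert {a, b} E0)"
    and cg: "congr d V r p"
    and lim: "\<And>x j. x \<in> V \<Longrightarrow> j < d \<Longrightarrow> (\<lambda>n. Q n x j) \<longlonglongrightarrow> r x j"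
    and edg: "\<And>n a b. a \<in> V \<Longrightarrow> b \<in> V \<Longrightarrow> {a, b} \<in> E \<Longrightarrow> sqdist d (Q n a) (Q n b) = sqdist d (r a) (r b)"
  shows "eventually (\<lambda>n. \<forall>a\<in>V. \<forall>b\<in>V. sqdist d (Q n a) (Q n b) = sqdist d (r a) (r b)) sequentially"
proof -
  have E0P: "E0 \<subseteq> pairs V" using E0 EP by blast
  have fin: "finite E0" using E0P finite_pairs[OF V] finite_subset by blast
  obtain h where h: "bij_betw h {0..<card E0} E0" using ex_bij_betw_nat_finite[OF fin] by blast
  have hp: "\<And>i. i < card E0 \<Longrightarrow> h i \<in> pairs V" using h E0P bij_betwE by fastforce
  have indr: "rows_indep d r E0" using indep_congr[OF V cg E0P] ind by simp
  then have detr: "Determinant.det (gram V d r h (card E0)) \<noteq> 0" using indep_iff_det[OF V E0P h] by blast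
  define M where "M n = (\<lambda>x j. (Q n x j + r x j) / 2)" for n
  define D where "D n = (\<lambda>x j. Q n x j - r x j)" for n
  have limM: "\<forall>v i. (v, i) \<in> V \<times> {..<d} \<longrightarrow> (\<lambda>n. M n v i) \<longlonglongrightarrow> r v i"
  proof (intro allI impI)
    fix v i assume "(v, i) \<in> V \<times> {..<d}"
    then have "(\<lambda>n. (Q n v i + r v i) / 2) \<longlonglongrightarrow> (r v i + r v i) / 2"
      by (intro tendsto_intros lim) auto
    then show "(\<lambda>n. M n v i) \<longlonglongrightarrow> r v i" unfolding M_def by simp
  qed
  have "(\<lambda>n. Determinant.det (gram V d (M n) h (card E0))) \<longlonglongrightarrow> Determinant.det (gram V d r h (card E0))"
    by (rule polyfun_tendsto[OF polyfun_gram[OF V hp] limM])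
  then have ev: "eventually (\<lambda>n. Determinant.det (gram V d (M n) h (card E0)) \<noteq> 0) sequentially"
    using detr by (rule tendsto_imp_eventually_ne)
  show ?thesis
  proof (rule eventually_mono[OF ev], intro ballI)
    fix n a b assume dn: "Determinant.det (gram V d (M n) h (card E0)) \<noteq> 0" and a: "a \<in> V" and b: "b \<in> V"
    have indM: "rows_indep d (M n) E0" using dn indep_iff_det[OF V E0P h] by blast
    have ipD: "ip V d (D n) (rig_row d (M n) {x, y}) = (sqdist d (Q n x) (Q n y) - sqdist d (r x) (r y)) / 2"
      if "x \<in> V" "y \<in> V" "x \<noteq> y" for x y
      unfolding ip_row[OF V that] D_def M_def by (rule avg_identity)
    show "sqdist d (Q n a) (Q n b) = sqdist d (r a) (r b)"
    proof (cases "a = b")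
      case True then show ?thesis by (simp add: sqdist_self)
    next
      case ab: False
      show ?thesis
      proof (cases "{a, b} \<in> E0")
        case True then show ?thesis using edg a b E0 by blast
      next
        case nE: False
        have orth: "\<forall>f\<in>E0. ip V d (D n) (rig_row d (M n) f) = 0"
        proof
          fix f assume f: "f \<in> E0"
          then obtain c g where cg: "f = {c, g}" "c \<in> V" "g \<in> V" "c \<noteq> g" using E0P by (blast elim: pairsE)
          have "sqdist d (Q n c) (Q n g) = sqdist d (r c) (r g)" using edg cg f E0 by blast
          then show "ip V d (D n) (rig_row d (M n) f) = 0" using ipD[OF cg(2-4)] cg(1) by simp
        qed
        have "ip V d (D n) (rig_row d (M n) {a, b}) = 0"
          by (rule dep_orth[OF V E0P nE indM dep[OF a b ab nE] orth])
        then show ?thesis using ipD[OF a b ab] by simp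
      qed
    qed
  qed
qed

lemma global_rigid:
  fixes q :: "real \<Rightarrow> 'a \<Rightarrow> nat \<Rightarrow> real"
  assumes V: "finite V" and EP: "E \<subseteq> pairs V" and E0: "E0 \<subseteq> E" and ind: "rows_indep d p E0"
    and dep: "\<And>r a b. a \<in> V \<Longrightarrow> b \<in> V \<Longrightarrow> a \<noteq> b \<Longrightarrow> {a, b} \<notin> E0 \<Longrightarrow> \<not> rows_indep d r (insert {a, b} E0)"
    and cont: "\<forall>v\<in>V. \<forall>i<d. continuous_on {0..1} (\<lambda>t. q t v i)"
    and init: "\<forall>v\<in>V. \<forall>i<d. q 0 v i = p v i"
    and edges: "\<forall>t\<in>{0..1}. \<forall>u\<in>V. \<forall>v\<in>V. {u, v} \<in> E \<longrightarrow> sqdist d (q t u) (q t v) = sqdist d (p u) (p v)"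
  shows "\<forall>t\<in>{0..1}. congr d V (q t) p"
proof (rule ccontr)
  assume "\<not> (\<forall>t\<in>{0..1}. congr d V (q t) p)"
  define Bs where "Bs = {t \<in> {0..1::real}. \<not> congr d V (q t) p}"
  have ne: "Bs \<noteq> {}" unfolding Bs_def using \<open>\<not> _\<close> by blast
  have bdd: "bdd_below Bs" unfolding Bs_def by (rule bdd_belowI[of _ 0]) auto
  define T where "T = Inf Bs"
  have T0: "0 \<le> T" unfolding T_def by (rule cInf_greatest[OF ne]) (auto simp: Bs_def)
  obtain b0 where b0: "b0 \<in> Bs" using ne by blast
  have T1: "T \<le> 1" unfolding T_def using cInf_lower[OF b0 bdd] b0 unfolding Bs_def by auto
  have TB: "T \<le> t" if "t \<in> Bs" for t unfolding T_def using cInf_lower[OF that bdd] .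
  have below: "congr d V (q s) p" if "0 \<le> s" "s < T" for s
  proof (rule ccontr)
    assume "\<not> congr d V (q s) p"
    then have "s \<in> Bs" unfolding Bs_def using that T1 by auto
    then show False using TB that by fastforce
  qed
  have seqc: "(\<lambda>n. q (tt n) v i) \<longlonglongrightarrow> q t0 v i"
    if "v \<in> V" "i < d" "\<forall>n. tt n \<in> {0..1}" "t0 \<in> {0..1}" "tt \<longlonglongrightarrow> t0" for tt t0 v i
  proof -
    have "continuous_on {0..1} (\<lambda>t. q t v i)" using cont that by blast
    then have "((\<lambda>t. q t v i) \<circ> tt) \<longlonglongrightarrow> q t0 v i"
      unfolding continuous_on_sequentially using that by blast
    then show ?thesis by (simp add: comp_def)
  qed
  have congT: "congr d V (q T) p"
  proof (cases "T = 0")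
    case True
    show ?thesis unfolding congr_def sqdist_def True
      using init by (auto intro!: sum.cong)
  next
    case False
    then have Tp: "T > 0" using T0 by simp
    define s where "s n = T - T * inverse (real (Suc n))" for n
    have s01: "0 \<le> s n" "s n < T" for n
    proof -
      have "inverse (real (Suc n)) \<le> 1" "inverse (real (Suc n)) > 0" by (auto simp: field_simps)
      then show "0 \<le> s n" "s n < T" unfolding s_def using Tp
        by (auto simp: mult_le_cancel_left1 mult_pos_pos)
    qed
    have slim: "s \<longlonglongrightarrow> T"
    proof -
      have "(\<lambda>n. T - T * inverse (real (Suc n))) \<longlonglongrightarrow> T - T * 0"
        by (intro tendsto_intros LIMSEQ_inverse_real_of_nat)
      then show ?thesis unfolding s_def by simp
    qed
    show ?thesis unfolding congr_def
    proof (intro ballI)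
      fix a b assume a: "a \<in> V" and b: "b \<in> V"
      have lim: "(\<lambda>n. sqdist d (q (s n) a) (q (s n) b)) \<longlonglongrightarrow> sqdist d (q T a) (q T b)"
        unfolding sqdist_def
        by (intro tendsto_intros seqc[OF a] seqc[OF b] slim) (use s01 T0 T1 Tp in \<open>auto simp: less_imp_le order.trans[OF _ T1]\<close>)
      have "sqdist d (q (s n) a) (q (s n) b) = sqdist d (p a) (p b)" for n
        using below[OF s01] a b unfolding congr_def by blast
      then have "(\<lambda>n. sqdist d (q (s n) a) (q (s n) b)) \<longlonglongrightarrow> sqdist d (p a) (p b)" by simp
      then show "sqdist d (q T a) (q T b) = sqdist d (p a) (p b)" using lim LIMSEQ_unique by blast
    qed
  qed
  have "\<forall>n. \<exists>t. t \<in> Bs \<and> t < T + inverse (real (Suc n))"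
  proof
    fix n
    have "Inf Bs < T + inverse (real (Suc n))" unfolding T_def by simp
    then show "\<exists>t. t \<in> Bs \<and> t < T + inverse (real (Suc n))" using cInf_lessD[OF ne] by blast
  qed
  then obtain tt where tt: "\<And>n. tt n \<in> Bs" "\<And>n. tt n < T + inverse (real (Suc n))"
    using choice[of "\<lambda>n t. t \<in> Bs \<and> t < T + inverse (real (Suc n))"] by blast
  have tt01: "tt n \<in> {0..1}" for n using tt(1) unfolding Bs_def by blast
  have ttlim: "tt \<longlonglongrightarrow> T"
  proof (rule tendsto_sandwich[of "\<lambda>n. T" tt sequentially "\<lambda>n. T + inverse (real (Suc n))"])
    show "\<forall>\<^sub>F n in sequentially. T \<le> tt n" using TB tt(1) by simp
    show "\<forall>\<^sub>F n in sequentially. tt n \<le> T + inverse (real (Suc n))" by (intro always_eventually allI less_imp_le tt(2))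
    show "(\<lambda>n. T) \<longlonglongrightarrow> T" by simp
    have "(\<lambda>n. T + inverse (real (Suc n))) \<longlonglongrightarrow> T + 0"
      by (intro tendsto_intros LIMSEQ_inverse_real_of_nat)
    then show "(\<lambda>n. T + inverse (real (Suc n))) \<longlonglongrightarrow> T" by simp
  qed
  have T01: "T \<in> {0..1}" using T0 T1 by simp
  have ev: "eventually (\<lambda>n. \<forall>a\<in>V. \<forall>b\<in>V. sqdist d (q (tt n) a) (q (tt n) b) = sqdist d (q T a) (q T b)) sequentially"
  proof (rule local_rigid[OF V EP E0 ind dep congT])
    show "\<And>x j. x \<in> V \<Longrightarrow> j < d \<Longrightarrow> (\<lambda>n. q (tt n) x j) \<longlonglongrightarrow> q T x j"
      using seqc tt01 T01 ttlim by blast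
    fix n a b assume a: "a \<in> V" and b: "b \<in> V" and e: "{a, b} \<in> E"
    have "sqdist d (q (tt n) a) (q (tt n) b) = sqdist d (p a) (p b)" using edges tt01 a b e by blast
    also have "\<dots> = sqdist d (q T a) (q T b)" using congT a b unfolding congr_def by simp
    finally show "sqdist d (q (tt n) a) (q (tt n) b) = sqdist d (q T a) (q T b)" .
  qed
  then obtain N where "\<forall>a\<in>V. \<forall>b\<in>V. sqdist d (q (tt N) a) (q (tt N) b) = sqdist d (q T a) (q T b)"
    unfolding eventually_sequentially by blast
  then have "congr d V (q (tt N)) p" using congT unfolding congr_def by simp
  then show False using tt(1)[of N] unfolding Bs_def by blast
qed




theorem lemma4p1:
  fixes V :: "'a set" and E :: "'a set set" and d :: nat
  assumes "simple_graph V E"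
    and "\<forall>u\<in>V. \<forall>v\<in>V. u \<noteq> v \<and> {u, v} \<notin> E \<longrightarrow>
           degree V E u + degree V E v + 2 \<ge> card V + d"
    and "\<exists>w\<in>V. \<forall>u\<in>neighbourhood V E w. \<forall>v\<in>neighbourhood V E w.
           u \<noteq> v \<and> {u, v} \<notin> E \<longrightarrow> R_linked d V E u v"
  shows "rigid d V E"
proof -
  obtain w where w: "w \<in> V" and lk: "\<forall>u\<in>neighbourhood V E w. \<forall>v\<in>neighbourhood V E w.
           u \<noteq> v \<and> {u, v} \<notin> E \<longrightarrow> R_linked d V E u v"
    using assms(3) by blast
  have V: "finite V" using assms(1) unfolding simple_graph_def by simp
  have EP: "E \<subseteq> pairs V" by (rule sg_pairs[OF assms(1)])
  show ?thesis unfolding rigid_def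
  proof (intro allI impI)
    fix p assume gen: "generic d V p"
    obtain E0 where E0: "E0 \<subseteq> E" "rows_indep d p E0"
      and dep0: "\<forall>a\<in>V. \<forall>b\<in>V. a \<noteq> b \<longrightarrow> {a, b} \<notin> E0 \<longrightarrow> \<not> rows_indep d p (insert {a, b} E0)"
      using allpairs[OF assms(1) assms(2) w lk gen] by blast
    have E0P: "E0 \<subseteq> pairs V" using E0(1) EP by blast
    have dep: "\<not> rows_indep d r (insert {a, b} E0)"
      if a: "a \<in> V" and b: "b \<in> V" and ab: "a \<noteq> b" and nE: "{a, b} \<notin> E0" for r a b
    proof
      assume ir: "rows_indep d r (insert {a, b} E0)"
      have iP: "insert {a, b} E0 \<subseteq> pairs V" using E0P pairsI[OF a b ab] by simp
      have "rows_indep d p (insert {a, b} E0)" by (rule indep_transfer[OF gen V iP ir])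
      then show False using dep0 a b ab nE by blast
    qed
    show "\<not> flexible_framework d V E p"
    proof
      assume "flexible_framework d V E p"
      then obtain q :: "real \<Rightarrow> 'a \<Rightarrow> nat \<Rightarrow> real" where
        cont: "\<forall>v\<in>V. \<forall>i<d. continuous_on {0..1} (\<lambda>t. q t v i)" and
        init: "\<forall>v\<in>V. \<forall>i<d. q 0 v i = p v i" and
        edges: "\<forall>t\<in>{0..1}. \<forall>u\<in>V. \<forall>v\<in>V. {u, v} \<in> E \<longrightarrow> sqdist d (q t u) (q t v) = sqdist d (p u) (p v)" and
        ex: "\<exists>t\<in>{0..1}. \<exists>u\<in>V. \<exists>v\<in>V. sqdist d (q t u) (q t v) \<noteq> sqdist d (p u) (p v)"
        unfolding flexible_framework_def by blast
      have "\<forall>t\<in>{0..1}. congr d V (q t) p"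
        by (rule global_rigid[OF V EP E0 dep cont init edges])
      then show False using ex unfolding congr_def by blast
    qed
  qed
qed


end
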